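(* Let $\mathcal{D}$ be a $\{K_3,K_4\}$-decomposition of $K_{18}$ with $\alpha=13$, let $W$ be the set of vertices $x$ with $\alpha_x\ge 2$, and for $i\in\{0,1,2,3\}$ let $t_i$ be the number of copies of $K_3$ in $\mathcal{D}$ having exactly $i$ vertices in $W$. Then $(t_0,t_1,t_2,t_3)\neq(1,0,8,4)$.
   Context: A $\{K_3,K_4\}$-decomposition of $K_v$ is a collection of subgraphs, each isomorphic to $K_3$ or $K_4$, such that every edge of $K_v$ lies in exactly one of them. $\alpha$ is the number of copies of $K_3$ in the decomposition, and for a vertex $x$, $\alpha_x$ is the number of copies of $K_3$ in the decomposition containing $x$. *)

theory Defs
  imports Main
begin

text \<open>Blocks are determined by their vertex sets.\<close>
definition K34_decomp :: "'a set \<Rightarrow> 'a set set \<Rightarrow> bool" where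
  "K34_decomp V D \<longleftrightarrow>
     (\<forall>B\<in>D. B \<subseteq> V \<and> (card B = 3 \<or> card B = 4)) \<and>
     (\<forall>x\<in>V. \<forall>y\<in>V. x \<noteq> y \<longrightarrow> (\<exists>!B. B \<in> D \<and> x \<in> B \<and> y \<in> B))"

definition triangles :: "'a set set \<Rightarrow> 'a set set" where
  "triangles D = {B \<in> D. card B = 3}"

definition alpha_at :: "'a set set \<Rightarrow> 'a \<Rightarrow> nat" where
  "alpha_at D x = card {B \<in> triangles D. x \<in> B}"

end

theory Submission imports Defs begin

lemma dc:
  assumes "finite F" "finite A"
  shows "(\<Sum>B\<in>F. card (B \<inter> A)) = (\<Sum>x\<in>A. card {B\<in>F. x\<in>B})"
proof -
  have 1: "card (B \<inter> A) = (\<Sum>x\<in>A. if x \<in> B then 1 else 0)" for B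
  proof -
    have "B \<inter> A = {x\<in>A. x \<in> B}" by auto
    then have "card (B \<inter> A) = (\<Sum>x\<in>{x\<in>A. x \<in> B}. 1)" by simp
    also have "\<dots> = (\<Sum>x\<in>A. if x \<in> B then 1 else 0)" using assms(2) by (rule sum.inter_filter)
    finally show ?thesis .
  qed
  have 2: "card {B\<in>F. x\<in>B} = (\<Sum>B\<in>F. if x \<in> B then 1 else 0)" for x
  proof -
    have "card {B\<in>F. x\<in>B} = (\<Sum>B\<in>{B\<in>F. x \<in> B}. 1)" by simp
    also have "\<dots> = (\<Sum>B\<in>F. if x \<in> B then 1 else 0)" using assms(1) by (rule sum.inter_filter)
    finally show ?thesis .
  qed
  show ?thesis unfolding 1 2 by (rule sum.swap)
qed

lemma pairs:
  assumes fin: "finite V" and dec: "K34_decomp V D" and S: "S \<subseteq> V"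
  shows "(\<Sum>B\<in>D. card (B \<inter> S) choose 2) = card S choose 2"
proof -
  define P where "P X = {e. e \<subseteq> X \<and> card e = (2::nat)}" for X :: "'a set"
  have fD: "finite D" using dec fin unfolding K34_decomp_def
    by (meson Pow_iff finite_Pow_iff rev_finite_subset subsetI)
  have fB: "finite B" if "B \<in> D" for B using dec fin that unfolding K34_decomp_def
    by (meson rev_finite_subset)
  have uniq: "\<And>x y. x\<in>V \<Longrightarrow> y\<in>V \<Longrightarrow> x\<noteq>y \<Longrightarrow> \<exists>!B. B \<in> D \<and> x \<in> B \<and> y \<in> B"
    using dec unfolding K34_decomp_def by blast
  have BV: "\<And>B. B \<in> D \<Longrightarrow> B \<subseteq> V" using dec unfolding K34_decomp_def by blast
  have eq: "P S = (\<Union>B\<in>D. P (B \<inter> S))"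
  proof
    show "P S \<subseteq> (\<Union>B\<in>D. P (B \<inter> S))"
    proof
      fix e assume "e \<in> P S"
      then have "e \<subseteq> S" "card e = 2" unfolding P_def by auto
      then obtain x y where e: "e = {x,y}" "x \<noteq> y" by (meson card_2_iff)
      then have "x \<in> V" "y \<in> V" using \<open>e \<subseteq> S\<close> S by auto
      then obtain B where "B \<in> D" "x \<in> B" "y \<in> B" using uniq e(2) by blast
      then show "e \<in> (\<Union>B\<in>D. P (B \<inter> S))" using e \<open>e \<subseteq> S\<close> \<open>card e = 2\<close>
        unfolding P_def by auto
    qed
  next
    show "(\<Union>B\<in>D. P (B \<inter> S)) \<subseteq> P S" unfolding P_def by auto
  qed
  have disj: "\<forall>B1\<in>D. \<forall>B2\<in>D. B1 \<noteq> B2 \<longrightarrow> P (B1 \<inter> S) \<inter> P (B2 \<inter> S) = {}"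
  proof (intro ballI impI)
    fix B1 B2 assume h: "B1 \<in> D" "B2 \<in> D" "B1 \<noteq> B2"
    show "P (B1 \<inter> S) \<inter> P (B2 \<inter> S) = {}"
    proof (rule ccontr)
      assume "P (B1 \<inter> S) \<inter> P (B2 \<inter> S) \<noteq> {}"
      then obtain e where "e \<subseteq> B1 \<inter> S" "e \<subseteq> B2 \<inter> S" "card e = 2" unfolding P_def by auto
      then obtain x y where e: "e = {x,y}" "x \<noteq> y" by (meson card_2_iff)
      then have "x \<in> V" "y \<in> V" using \<open>e \<subseteq> B1 \<inter> S\<close> S by auto
      then show False using uniq[OF \<open>x\<in>V\<close> \<open>y\<in>V\<close> e(2)] h e \<open>e \<subseteq> B1 \<inter> S\<close> \<open>e \<subseteq> B2 \<inter> S\<close> by auto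
    qed
  qed
  have "card (P S) = (\<Sum>B\<in>D. card (P (B \<inter> S)))"
    unfolding eq by (rule card_UN_disjoint[OF fD _ disj]) (auto simp: P_def fB intro: finite_subset)
  moreover have "card (P X) = card X choose 2" if "finite X" for X
    unfolding P_def using n_subsets[OF that] by simp
  moreover have "finite S" using S fin finite_subset by blast
  ultimately show ?thesis using fB by simp
qed

lemma sum_tri:
  assumes "finite T" "\<And>B. B \<in> T \<Longrightarrow> g B \<le> (3::nat)"
  shows "(\<Sum>B\<in>T. f (g B)) = (\<Sum>i\<in>{0,1,2,3}. card {B\<in>T. g B = i} * f i)"
proof -
  have "(\<Sum>B\<in>T. f (g B)) = (\<Sum>i\<in>{0,1,2,3}. \<Sum>B\<in>{B. B \<in> T \<and> g B = i}. f (g B))"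
  proof (intro sum.group[symmetric] assms(1))
    show "g ` T \<subseteq> {0, 1, 2, 3}"
    proof
      fix y assume "y \<in> g ` T"
      then obtain B where "B \<in> T" "y = g B" by auto
      then have "y \<le> 3" using assms(2) by auto
      then show "y \<in> {0,1,2,3}" by auto
    qed
  qed simp
  also have "\<dots> = (\<Sum>i\<in>{0,1,2,3}. card {B\<in>T. g B = i} * f i)"
    by (intro sum.cong refl) simp
  finally show ?thesis .
qed

theorem mainTheorem14:
  fixes V :: "'a set" and D :: "'a set set"
  assumes "finite V" and "card V = 18"
    and "K34_decomp V D"
    and "card (triangles D) = 13"
  shows "(let W = {x \<in> V. alpha_at D x \<ge> 2};
              t = (\<lambda>i::nat. card {B \<in> triangles D. card (B \<inter> W) = i})
          in (t 0, t 1, t 2, t 3) \<noteq> (1, 0, 8, 4))"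
proof -
  note fin = assms(1) and dec = assms(3)
  define T where "T = triangles D"
  define Q where "Q = {B\<in>D. card B = 4}"
  define al where "al x = card {B\<in>T. x \<in> B}" for x
  define be where "be x = card {B\<in>Q. x \<in> B}" for x
  define W where "W = {x \<in> V. alpha_at D x \<ge> 2}"
  have alat: "alpha_at D x = al x" for x unfolding alpha_at_def al_def T_def ..
  have fD: "finite D" using dec fin unfolding K34_decomp_def
    by (meson Pow_iff finite_Pow_iff rev_finite_subset subsetI)
  have BV: "\<And>B. B \<in> D \<Longrightarrow> B \<subseteq> V" using dec unfolding K34_decomp_def by blast
  have c34: "\<And>B. B \<in> D \<Longrightarrow> card B = 3 \<or> card B = 4" using dec unfolding K34_decomp_def by blast
  have uniq: "\<And>x y. x\<in>V \<Longrightarrow> y\<in>V \<Longrightarrow> x\<noteq>y \<Longrightarrow> \<exists>!B. B \<in> D \<and> x \<in> B \<and> y \<in> B"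
    using dec unfolding K34_decomp_def by blast
  have fT: "finite T" and fQ: "finite Q" using fD unfolding T_def Q_def triangles_def by auto
  have TQ: "D = T \<union> Q" "T \<inter> Q = {}" using c34 unfolding T_def Q_def triangles_def by auto
  have cT: "card T = 13" using assms(4) T_def by simp
  have Tc: "\<And>B. B \<in> T \<Longrightarrow> card B = 3" unfolding T_def triangles_def by auto
  have Qc: "\<And>B. B \<in> Q \<Longrightarrow> card B = 4" unfolding Q_def by auto
  have TD: "T \<subseteq> D" "Q \<subseteq> D" using TQ by auto
  have splitD: "(\<Sum>B\<in>D. f B) = (\<Sum>B\<in>T. f B) + (\<Sum>B\<in>Q. f B)" for f :: "'a set \<Rightarrow> nat"
    using TQ fT fQ by (simp add: sum.union_disjoint)
  have "(\<Sum>B\<in>D. card (B \<inter> V) choose 2) = 153"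
    using pairs[OF fin dec order_refl] assms(2) by (simp add: numeral_eq_Suc)
  then have "(\<Sum>B\<in>T. card (B \<inter> V) choose 2) + (\<Sum>B\<in>Q. card (B \<inter> V) choose 2) = 153"
    by (simp add: splitD)
  moreover have "(\<Sum>B\<in>T. card (B \<inter> V) choose 2) = 39"
  proof -
    have "(\<Sum>B\<in>T. card (B \<inter> V) choose 2) = (\<Sum>B\<in>T. 3)"
      proof (intro sum.cong refl)
      fix B assume "B \<in> T" then have "B \<inter> V = B" "card B = 3" using Tc TD BV by blast+
      then show "card (B \<inter> V) choose 2 = 3" by (simp add: numeral_eq_Suc)
    qed
    then show ?thesis using cT by simp
  qed
  moreover have "(\<Sum>B\<in>Q. card (B \<inter> V) choose 2) = card Q * 6"
  proof -
    have "(\<Sum>B\<in>Q. card (B \<inter> V) choose 2) = (\<Sum>B\<in>Q. 6)"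
      proof (intro sum.cong refl)
      fix B assume "B \<in> Q" then have "B \<inter> V = B" "card B = 4" using Qc TD BV by blast+
      then show "card (B \<inter> V) choose 2 = 6" by (simp add: numeral_eq_Suc)
    qed
    then show ?thesis by simp
  qed
  ultimately have cQ: "card Q = 19" by simp
  have deg: "2 * al x + 3 * be x = 17" if xV: "x \<in> V" for x
  proof -
    have eq: "V - {x} = (\<Union>B\<in>{B\<in>D. x \<in> B}. B - {x})"
    proof
      show "V - {x} \<subseteq> (\<Union>B\<in>{B\<in>D. x \<in> B}. B - {x})"
      proof
        fix y assume "y \<in> V - {x}"
        then obtain B where "B \<in> D" "x \<in> B" "y \<in> B" using uniq[OF xV, of y] by auto
        then show "y \<in> (\<Union>B\<in>{B\<in>D. x \<in> B}. B - {x})" using \<open>y \<in> V - {x}\<close> by auto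
      qed
    qed (use BV in auto)
    have "card (V - {x}) = (\<Sum>B\<in>{B\<in>D. x \<in> B}. card (B - {x}))"
      unfolding eq
    proof (rule card_UN_disjoint)
      show "finite {B \<in> D. x \<in> B}" using fD by simp
      show "\<forall>i\<in>{B \<in> D. x \<in> B}. finite (i - {x})" using BV fin finite_subset by blast
      show "\<forall>i\<in>{B \<in> D. x \<in> B}. \<forall>j\<in>{B \<in> D. x \<in> B}. i \<noteq> j \<longrightarrow> (i - {x}) \<inter> (j - {x}) = {}"
      proof (intro ballI impI)
        fix i j assume h: "i \<in> {B \<in> D. x \<in> B}" "j \<in> {B \<in> D. x \<in> B}" "i \<noteq> j"
        show "(i - {x}) \<inter> (j - {x}) = {}"
        proof (rule ccontr)
          assume "(i - {x}) \<inter> (j - {x}) \<noteq> {}"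
          then obtain y where "y \<in> i" "y \<in> j" "y \<noteq> x" by auto
          moreover have "y \<in> V" using BV h \<open>y \<in> i\<close> by auto
          ultimately show False using uniq[OF xV \<open>y \<in> V\<close>] h by auto
        qed
      qed
    qed
    also have "\<dots> = (\<Sum>B\<in>{B\<in>T. x \<in> B}. card (B - {x})) + (\<Sum>B\<in>{B\<in>Q. x \<in> B}. card (B - {x}))"
    proof -
      have "{B\<in>D. x \<in> B} = {B\<in>T. x \<in> B} \<union> {B\<in>Q. x \<in> B}" using TQ by auto
      then show ?thesis using TQ fT fQ by (simp add: sum.union_disjoint disjoint_iff)
    qed
    also have "\<dots> = (\<Sum>B\<in>{B\<in>T. x \<in> B}. 2) + (\<Sum>B\<in>{B\<in>Q. x \<in> B}. 3)"
      using Tc Qc by (intro arg_cong2[where f="(+)"] sum.cong refl) auto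
    finally show ?thesis using assms(2) xV fin unfolding al_def be_def by simp
  qed
  show ?thesis unfolding Let_def W_def[symmetric] T_def[symmetric]
  proof
    assume H: "(card {B \<in> T. card (B \<inter> W) = 0}, card {B \<in> T. card (B \<inter> W) = 1},
        card {B \<in> T. card (B \<inter> W) = 2}, card {B \<in> T. card (B \<inter> W) = 3}) = (1, 0, 8, 4)"
    have WV: "W \<subseteq> V" unfolding W_def by auto
    have fW: "finite W" using WV fin finite_subset by blast
    have le3: "\<And>B. B \<in> T \<Longrightarrow> card (B \<inter> W) \<le> 3"
      by (metis Tc TD(1) BV fin card_mono inf_le1 rev_finite_subset subsetD)
    have "(\<Sum>B\<in>T. card (B \<inter> W)) = 28"
      using sum_tri[OF fT le3, where f="\<lambda>i. i"] H by simp
    then have sW: "(\<Sum>x\<in>W. al x) = 28" using dc[OF fT fW] unfolding al_def by simp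
    have "(\<Sum>B\<in>T. card (B \<inter> V)) = 39"
    proof -
      have "(\<Sum>B\<in>T. card (B \<inter> V)) = (\<Sum>B\<in>T. 3)"
        proof (intro sum.cong refl)
        fix B assume "B \<in> T" then have "B \<inter> V = B" "card B = 3" using Tc TD BV by blast+
        then show "card (B \<inter> V) = 3" by simp
      qed
      then show ?thesis using cT by simp
    qed
    then have sV: "(\<Sum>x\<in>V. al x) = 39" using dc[OF fT fin] unfolding al_def by simp
    have "(\<Sum>x\<in>V. al x) = (\<Sum>x\<in>V - W. al x) + (\<Sum>x\<in>W. al x)"
      using sum.subset_diff[OF WV fin] .
    then have "(\<Sum>x\<in>V - W. al x) = 11" using sV sW by simp
    moreover have "(\<Sum>x\<in>V - W. al x) = (\<Sum>x\<in>V - W. 1)"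
    proof (intro sum.cong refl)
      fix x assume "x \<in> V - W"
      then have "al x < 2" "2 * al x + 3 * be x = 17" using deg unfolding W_def alat by auto
      then show "al x = 1" by presburger
    qed
    ultimately have "card (V - W) = 11" by simp
    then have cW: "card W = 7" using card_Diff_subset[OF fW WV] assms(2) by simp
    have ge4: "\<And>x. x \<in> W \<Longrightarrow> 4 \<le> al x"
    proof -
      fix x assume "x \<in> W"
      then have "al x \<ge> 2" "2 * al x + 3 * be x = 17" using deg unfolding W_def alat by auto
      then show "4 \<le> al x" by presburger
    qed
    have "(\<Sum>x\<in>W. al x - 4) = (\<Sum>x\<in>W. al x) - (\<Sum>x\<in>W. 4)"
      using ge4 by (intro sum_subtractf_nat) auto
    then have "(\<Sum>x\<in>W. al x - 4) = 0" using sW cW by simp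
    then have a4: "\<And>x. x \<in> W \<Longrightarrow> al x = 4" using fW ge4
      by (metis diff_is_0_eq le_antisym sum_eq_0_iff)
    have b3: "\<And>x. x \<in> W \<Longrightarrow> be x = 3"
    proof -
      fix x assume xW: "x \<in> W" then have "2 * al x + 3 * be x = 17" using deg WV by blast
      then show "be x = 3" using a4[OF xW] by simp
    qed
    have "(\<Sum>B\<in>Q. card (B \<inter> W)) = 21"
      using dc[OF fQ fW] b3 cW unfolding be_def by simp
    have p21: "(\<Sum>B\<in>D. card (B \<inter> W) choose 2) = 21"
      using pairs[OF fin dec WV] cW by (simp add: numeral_eq_Suc)
    have "(\<Sum>B\<in>T. card (B \<inter> W) choose 2) = 20"
      using sum_tri[OF fT le3, where f="\<lambda>i. i choose 2"] H by (simp add: numeral_eq_Suc)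
    then have q1: "(\<Sum>B\<in>Q. card (B \<inter> W) choose 2) = 1" using p21 splitD by simp
    have "(\<Sum>B\<in>Q. card (B \<inter> W)) \<le> (\<Sum>B\<in>Q. 1 + (card (B \<inter> W) choose 2))"
    proof (intro sum_mono)
      fix B show "card (B \<inter> W) \<le> 1 + (card (B \<inter> W) choose 2)"
      proof (cases "card (B \<inter> W)")
        case (Suc n)
        then show ?thesis by (cases n) (auto simp: choose_two)
      qed simp
    qed
    also have "\<dots> = card Q + (\<Sum>B\<in>Q. card (B \<inter> W) choose 2)" by (simp only: sum.distrib) simp
    also have "\<dots> = 20" using cQ q1 by simp
    finally show False using \<open>(\<Sum>B\<in>Q. card (B \<inter> W)) = 21\<close> by simp
  qed
qed

end
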